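(* Let $\alpha>-1$ and $\beta>0$ be fixed. For every bounded continuous $\Phi:[0,\infty)\to\mathbb{R}$, $\mathcal{R}_{\eta}^{(\alpha,\beta)}(\Phi;x)\to\Phi(x)$ as $\eta\to\infty$, uniformly in $x$ on every compact subset of $[0,\infty)$.
   Context: The generalized Laguerre polynomials are $\mathcal{L}_k^{(\alpha)}(t)=\sum_{i=0}^{k}\frac{(-1)^i}{i!}\binom{k+\alpha}{k-i}t^i$. Put $p_{\eta,k}(x)=e^{-\eta x/2}2^{-\alpha-1}2^{-k}\mathcal{L}_k^{(\alpha)}(-\eta x/2)$ and, for $k\ge1$, $z>0$, $\mathcal{I}_{k,\eta}^{\beta}(z)=\frac{\eta\beta e^{-\eta\beta z}(\eta\beta z)^{k\beta-1}}{\Gamma(k\beta)}$. The operator is $\mathcal{R}_{\eta}^{(\alpha,\beta)}(\Phi;x)=p_{\eta,0}(x)\Phi(0)+\sum_{k=1}^{\infty}p_{\eta,k}(x)\int_0^\infty\mathcal{I}_{k,\eta}^{\beta}(z)\Phi(z)\,dz$, $\eta>0$. *)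

theory Defs
  imports "HOL-Analysis.Analysis"
begin

definition laguerre :: "real \<Rightarrow> nat \<Rightarrow> real \<Rightarrow> real" where
  "laguerre \<alpha> k t = (\<Sum>i\<le>k. ((-1) ^ i / fact i) * ((real k + \<alpha>) gchoose (k - i)) * t ^ i)"

definition p_basis :: "real \<Rightarrow> real \<Rightarrow> nat \<Rightarrow> real \<Rightarrow> real" where
  "p_basis \<alpha> \<eta> k x = exp (- \<eta> * x / 2) * 2 powr (- \<alpha> - 1) * 2 powr (- real k)
      * laguerre \<alpha> k (- \<eta> * x / 2)"

definition I_kernel :: "real \<Rightarrow> real \<Rightarrow> nat \<Rightarrow> real \<Rightarrow> real" where
  "I_kernel \<beta> \<eta> k z = \<eta> * \<beta> * exp (- \<eta> * \<beta> * z) * (\<eta> * \<beta> * z) powr (real k * \<beta> - 1)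
      / Gamma (real k * \<beta>)"

definition R_op :: "real \<Rightarrow> real \<Rightarrow> real \<Rightarrow> (real \<Rightarrow> real) \<Rightarrow> real \<Rightarrow> real" where
  "R_op \<alpha> \<beta> \<eta> \<Phi> x = p_basis \<alpha> \<eta> 0 x * \<Phi> 0
      + (\<Sum>k. p_basis \<alpha> \<eta> (Suc k) x
              * (LINT z:{0<..}|lborel. I_kernel \<beta> \<eta> (Suc k) z * \<Phi> z))"

end

theory Submission
  imports Defs
begin


definition nb :: "real \<Rightarrow> nat \<Rightarrow> real" where
  "nb r j = ((real j + r - 1) gchoose j) * (1/2)^j"

lemma sums_shift0: "(\<lambda>n. f (Suc n)) sums s \<Longrightarrow> f 0 = (0::real) \<Longrightarrow> f sums s"
  using sums_Suc_iff[of f s] by simp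

lemma nb_nonneg: assumes "r > 0" shows "nb r j \<ge> 0"
proof -
  have "(real j + r - 1) gchoose j = pochhammer r j / fact j"
    by (simp add: gbinomial_pochhammer')
  moreover have "pochhammer r j > 0" using assms by (rule pochhammer_pos)
  ultimately show ?thesis unfolding nb_def by simp
qed

lemma nb0: "(\<lambda>j. nb r j) sums (2 powr r)"
proof -
  have "(\<lambda>n. ((-r) gchoose n) * (-1/2)^n) sums (1 + (-1/2)) powr (-r)"
    by (rule gen_binomial_real) simp
  moreover have "((-r) gchoose n) * (-1/2)^n = nb r n" for n
  proof -
    have "((-r) gchoose n) * (-1/2)^n = ((-1)^n * (-1/2)^n) * ((r + of_nat n - 1) gchoose n)"
      by (simp add: gbinomial_minus)
    also have "(-1)^n * (-1/2)^n = (1/2::real)^n"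
      by (simp add: power_mult_distrib[symmetric])
    finally show ?thesis by (simp add: nb_def algebra_simps)
  qed
  moreover have "(1 + (-1/2::real)) powr (-r) = 2 powr r"
    by (simp add: powr_minus_divide powr_divide)
  ultimately show ?thesis by simp
qed

lemma nb_absorb: "real (Suc j) * nb r (Suc j) = r / 2 * nb (r + 1) j"
proof -
  have "real (Suc j) * ((real (Suc j) + r - 1) gchoose Suc j) = (real j + r) * ((real j + r - 1) gchoose j)"
    using gbinomial_absorption[of j "real j + r"] by (simp add: algebra_simps)
  also have "\<dots> = r * ((real j + r) gchoose j)"
    using gbinomial_absorb_comp[of "real j + r" j] by simp
  finally have eq: "real (Suc j) * ((real (Suc j) + r - 1) gchoose Suc j) = r * ((real j + r) gchoose j)" .
  have "real (Suc j) * nb r (Suc j) = (real (Suc j) * ((real (Suc j) + r - 1) gchoose Suc j)) * (1/2)^(Suc j)"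
    by (simp only: nb_def mult.assoc)
  also have "\<dots> = r * ((real j + r) gchoose j) * (1/2)^(Suc j)" by (simp only: eq)
  also have "real j + (r + 1) - 1 = real j + r" by simp
  then have "r * ((real j + r) gchoose j) * (1/2)^(Suc j) = r / 2 * nb (r + 1) j"
    unfolding nb_def by simp
  finally show ?thesis .
qed

lemma nb1: "(\<lambda>j. real j * nb r j) sums (r * 2 powr r)"
proof -
  have "(\<lambda>j. r / 2 * nb (r + 1) j) sums (r / 2 * 2 powr (r + 1))"
    by (intro sums_mult nb0)
  also have "r / 2 * 2 powr (r + 1) = r * 2 powr r" by (simp add: powr_add)
  finally have "(\<lambda>j. real (Suc j) * nb r (Suc j)) sums (r * 2 powr r)"
    by (simp only: nb_absorb)
  then show ?thesis by (rule sums_shift0[of "\<lambda>j. real j * nb r j"]) simp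
qed

lemma nb2: "(\<lambda>j. real j ^ 2 * nb r j) sums ((r^2 + 2 * r) * 2 powr r)"
proof -
  have "(\<lambda>j. r / 2 * (real j * nb (r + 1) j + nb (r + 1) j)) sums
          (r / 2 * ((r + 1) * 2 powr (r + 1) + 2 powr (r + 1)))"
    by (intro sums_mult sums_add nb0 nb1)
  also have "r / 2 * ((r + 1) * 2 powr (r + 1) + 2 powr (r + 1)) = (r^2 + 2 * r) * 2 powr r"
    by (simp add: powr_add power2_eq_square algebra_simps)
  also have "(\<lambda>j. r / 2 * (real j * nb (r + 1) j + nb (r + 1) j)) = (\<lambda>j. real (Suc j)^2 * nb r (Suc j))"
  proof
    fix j
    have "real (Suc j)^2 * nb r (Suc j) = real (Suc j) * (real (Suc j) * nb r (Suc j))"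
      by (simp add: power2_eq_square)
    also have "\<dots> = real (Suc j) * (r / 2 * nb (r + 1) j)" by (simp only: nb_absorb)
    finally show "r / 2 * (real j * nb (r + 1) j + nb (r + 1) j) = real (Suc j)^2 * nb r (Suc j)"
      by (simp add: algebra_simps)
  qed
  finally show ?thesis by (rule sums_shift0[of "\<lambda>j. real j ^ 2 * nb r j"]) simp
qed

definition poi :: "real \<Rightarrow> nat \<Rightarrow> real" where
  "poi l i = exp (- l) * l ^ i / fact i"

lemma poi_nonneg: "l \<ge> 0 \<Longrightarrow> poi l i \<ge> 0"
  by (simp add: poi_def)

lemma poi0: "(\<lambda>i. poi l i) sums 1"
proof -
  have "(\<lambda>n. exp (-l) * (l^n /\<^sub>R fact n)) sums (exp (-l) * exp l)"
    by (intro sums_mult exp_converges)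
  then show ?thesis by (simp add: poi_def exp_minus field_simps)
qed

lemma poi_shift: "real (Suc i) * poi l (Suc i) = l * poi l i"
proof -
  have "fact (Suc i) = real (Suc i) * (fact i :: real)" by (simp only: fact_Suc of_nat_mult)
  then show ?thesis unfolding poi_def by (simp del: of_nat_Suc fact_Suc)
qed

lemma poi1: "(\<lambda>i. real i * poi l i) sums l"
proof -
  have "(\<lambda>i. l * poi l i) sums (l * 1)" by (intro sums_mult poi0)
  then have "(\<lambda>i. real (Suc i) * poi l (Suc i)) sums l" by (simp only: poi_shift) simp
  then show ?thesis by (rule sums_shift0[of "\<lambda>i. real i * poi l i"]) simp
qed

lemma poi2: "(\<lambda>i. real i ^ 2 * poi l i) sums (l^2 + l)"
proof -
  have "(\<lambda>i. l * (real i * poi l i + poi l i)) sums (l * (l + 1))"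
    by (intro sums_mult sums_add poi0 poi1)
  also have "(\<lambda>i. l * (real i * poi l i + poi l i)) = (\<lambda>i. real (Suc i)^2 * poi l (Suc i))"
  proof
    fix i
    have "real (Suc i)^2 * poi l (Suc i) = real (Suc i) * (real (Suc i) * poi l (Suc i))"
      by (simp add: power2_eq_square)
    also have "\<dots> = real (Suc i) * (l * poi l i)" by (simp only: poi_shift)
    finally show "l * (real i * poi l i + poi l i) = real (Suc i)^2 * poi l (Suc i)"
      by (simp add: algebra_simps)
  qed
  also have "l * (l + 1) = l^2 + l" by (simp add: power2_eq_square algebra_simps)
  finally show ?thesis by (rule sums_shift0[of "\<lambda>i. real i ^ 2 * poi l i"]) simp
qed

lemma diag_swap:
  fixes h :: "nat \<Rightarrow> nat \<Rightarrow> real"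
  assumes nn: "\<And>i j. h i j \<ge> 0" and hs: "\<And>i. (h i) sums s i" and ss: "s sums S"
  shows "(\<lambda>k. \<Sum>i\<le>k. h i (k - i)) sums S"
proof -
  have hs': "((\<lambda>j. (\<lambda>(i,j). h i j) (i, j)) has_sum s i) UNIV" for i
    using sums_nonneg_imp_has_sum[OF hs nn] by simp
  have snn: "s i \<ge> 0" for i
    using hs'[of i] by (rule has_sum_nonneg) (auto intro: nn)
  have ss': "(s has_sum S) UNIV" using sums_nonneg_imp_has_sum[OF ss snn] .
  have summ: "(\<lambda>(i,j). h i j) summable_on (Sigma UNIV (\<lambda>_. UNIV))"
    by (rule summable_on_SigmaI[OF hs' has_sum_imp_summable[OF ss']]) (auto intro: nn)
  have all: "((\<lambda>(i,j). h i j) has_sum S) (Sigma UNIV (\<lambda>_. UNIV))"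
    by (rule has_sum_SigmaI[OF hs' ss' summ])
  have "((\<lambda>(k,i). h i (k - i)) has_sum S) (Sigma UNIV (\<lambda>k. {..k}))"
  proof -
    have "((\<lambda>(k,i). h i (k - i)) has_sum S) (Sigma UNIV (\<lambda>k. {..k})) =
          ((\<lambda>(i,j). h i j) has_sum S) (Sigma UNIV (\<lambda>_. UNIV))"
      by (rule has_sum_reindex_bij_witness[where j = "\<lambda>(k,i). (i, k - i)" and i = "\<lambda>(i,j). (i + j, i)"])
         auto
    then show ?thesis using all by simp
  qed
  moreover have "((\<lambda>i. (\<lambda>(k,i). h i (k - i)) (k, i)) has_sum (\<Sum>i\<le>k. h i (k - i))) {..k}" for k
    by (simp add: has_sum_finite)
  ultimately have "((\<lambda>k. \<Sum>i\<le>k. h i (k - i)) has_sum S) UNIV"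
    by (rule has_sum_Sigma')
  then show ?thesis by (rule has_sum_imp_sums)
qed



definition hh :: "real \<Rightarrow> real \<Rightarrow> nat \<Rightarrow> nat \<Rightarrow> real" where
  "hh a l i j = poi l i * (2 powr (-(real i + a)) * nb (real i + a) j)"

lemma hh_nonneg: "a > 0 \<Longrightarrow> l \<ge> 0 \<Longrightarrow> hh a l i j \<ge> 0"
  unfolding hh_def by (intro mult_nonneg_nonneg poi_nonneg nb_nonneg) auto

lemma p_basis_expand:
  "p_basis \<alpha> \<eta> k x = (\<Sum>i\<le>k. hh (\<alpha> + 1) (\<eta> * x / 2) i (k - i))"
proof -
  have "p_basis \<alpha> \<eta> k x = (\<Sum>i\<le>k. exp (- \<eta> * x / 2) * 2 powr (- \<alpha> - 1) * 2 powr (- real k)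
      * (((-1) ^ i / fact i) * ((real k + \<alpha>) gchoose (k - i)) * (- \<eta> * x / 2) ^ i))"
    unfolding p_basis_def laguerre_def by (simp add: sum_distrib_left)
  also have "\<dots> = (\<Sum>i\<le>k. hh (\<alpha> + 1) (\<eta> * x / 2) i (k - i))"
  proof (rule sum.cong[OF refl])
    fix i assume "i \<in> {..k}"
    then have ik: "i \<le> k" by simp
    have e1: "(-1::real) ^ i * (- \<eta> * x / 2) ^ i = (\<eta> * x / 2) ^ i"
      by (simp add: power_mult_distrib[symmetric])
    have e2: "real (k - i) + (real i + (\<alpha> + 1)) - 1 = real k + \<alpha>"
      using ik by (simp add: of_nat_diff)
    have e3: "2 powr (-(real i + (\<alpha> + 1))) * (1/2::real) ^ (k - i) = 2 powr (- \<alpha> - 1) * 2 powr (- real k)"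
    proof -
      have h12: "(1/2::real) ^ (k - i) = 2 powr (- real (k - i))"
        by (simp add: powr_minus powr_realpow power_one_over inverse_eq_divide)
      then have "2 powr (-(real i + (\<alpha> + 1))) * (1/2::real) ^ (k - i) =
                 2 powr (-(real i + (\<alpha> + 1)) + - real (k - i))"
        by (simp only: h12 powr_add)
      also have "-(real i + (\<alpha> + 1)) + - real (k - i) = (- \<alpha> - 1) + (- real k)"
        using ik by (simp add: of_nat_diff)
      finally show ?thesis by (simp only: powr_add)
    qed
    have "exp (- \<eta> * x / 2) * 2 powr (- \<alpha> - 1) * 2 powr (- real k)
      * (((-1) ^ i / fact i) * ((real k + \<alpha>) gchoose (k - i)) * (- \<eta> * x / 2) ^ i)
      = exp (- \<eta> * x / 2) * (((-1::real) ^ i * (- \<eta> * x / 2) ^ i) * ((real k + \<alpha>) gchoose (k - i))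
         * (2 powr (- \<alpha> - 1) * 2 powr (- real k))) / fact i"
      by (simp add: field_simps)
    also have "\<dots> = exp (- \<eta> * x / 2) * ((\<eta> * x / 2) ^ i * ((real k + \<alpha>) gchoose (k - i))
         * (2 powr (-(real i + (\<alpha> + 1))) * (1/2::real) ^ (k - i))) / fact i"
      by (simp only: e1 e3)
    also have "\<dots> = hh (\<alpha> + 1) (\<eta> * x / 2) i (k - i)"
      unfolding hh_def poi_def nb_def e2 by (simp add: field_simps)
    finally show "exp (- \<eta> * x / 2) * 2 powr (- \<alpha> - 1) * 2 powr (- real k)
      * (((-1) ^ i / fact i) * ((real k + \<alpha>) gchoose (k - i)) * (- \<eta> * x / 2) ^ i)
      = hh (\<alpha> + 1) (\<eta> * x / 2) i (k - i)" .
  qed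
  finally show ?thesis .
qed

lemma inner0: assumes "a > 0" shows "(\<lambda>j. hh a l i j) sums poi l i"
proof -
  define r where "r = real i + a"
  have c: "2 powr (-r) * 2 powr r = 1" by (simp add: powr_add[symmetric])
  have "(\<lambda>j. poi l i * 2 powr (-r) * nb r j) sums
        (poi l i * (2 powr (-r) * 2 powr r))"
    by (simp only: mult.assoc[symmetric]) (intro sums_mult nb0)
  then show ?thesis unfolding hh_def r_def[symmetric] c by (simp add: mult.assoc)
qed

lemma inner1: assumes "a > 0" shows "(\<lambda>j. hh a l i j * real (i + j)) sums (poi l i * (2 * real i + a))"
proof -
  define r where "r = real i + a"
  have c: "2 powr (-r) * 2 powr r = 1" by (simp add: powr_add[symmetric])
  have "(\<lambda>j. poi l i * 2 powr (- r) * (real i * nb r j + real j * nb r j)) sums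
        (poi l i * 2 powr (- r) * (real i * 2 powr r + r * 2 powr r))"
    by (intro sums_mult sums_add nb0 nb1)
  moreover have "poi l i * 2 powr (- r) * (real i * 2 powr r + r * 2 powr r) = poi l i * (2 * real i + a)"
  proof -
    have "poi l i * 2 powr (- r) * (real i * 2 powr r + r * 2 powr r) = poi l i * (2 powr (-r) * 2 powr r) * (real i + r)"
      by (simp add: algebra_simps)
    then have "poi l i * 2 powr (- r) * (real i * 2 powr r + r * 2 powr r) = poi l i * (real i + r)"
      unfolding c by simp
    then show ?thesis by (simp add: r_def)
  qed
  ultimately show ?thesis unfolding hh_def r_def[symmetric] by (simp add: algebra_simps)
qed

lemma inner2: assumes "a > 0" shows "(\<lambda>j. hh a l i j * real (i + j) ^ 2) sums
   (poi l i * (real i ^ 2 + 2 * real i * (real i + a) + ((real i + a)^2 + 2 * (real i + a))))"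
proof -
  define r where "r = real i + a"
  have c: "2 powr (-r) * 2 powr r = 1" by (simp add: powr_add[symmetric])
  have "(\<lambda>j. poi l i * 2 powr (- r) * (real i ^ 2 * nb r j + 2 * real i * (real j * nb r j) + real j ^ 2 * nb r j)) sums
        (poi l i * 2 powr (- r) * (real i ^ 2 * 2 powr r + 2 * real i * (r * 2 powr r) + (r^2 + 2 * r) * 2 powr r))"
    by (intro sums_mult sums_add nb0 nb1 nb2)
  moreover have "poi l i * 2 powr (- r) * (real i ^ 2 * 2 powr r + 2 * real i * (r * 2 powr r) + (r^2 + 2 * r) * 2 powr r)
      = poi l i * (real i ^ 2 + 2 * real i * r + (r^2 + 2 * r))"
  proof -
    have "poi l i * 2 powr (- r) * (real i ^ 2 * 2 powr r + 2 * real i * (r * 2 powr r) + (r^2 + 2 * r) * 2 powr r)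
      = poi l i * (2 powr (-r) * 2 powr r) * (real i ^ 2 + 2 * real i * r + (r^2 + 2 * r))"
      by (simp add: algebra_simps)
    then show ?thesis unfolding c by simp
  qed
  ultimately show ?thesis unfolding hh_def r_def[symmetric] by (simp add: algebra_simps power2_eq_square)
qed

lemma mom_gen:
  assumes a: "\<alpha> > -1" and l: "\<eta> * x / 2 \<ge> 0" and q: "\<And>k. q k \<ge> 0"
    and inn: "\<And>i. (\<lambda>j. hh (\<alpha> + 1) (\<eta> * x / 2) i j * q (i + j)) sums t i" and ts: "t sums T"
  shows "(\<lambda>k. p_basis \<alpha> \<eta> k x * q k) sums T"
proof -
  have "(\<lambda>k. \<Sum>i\<le>k. hh (\<alpha> + 1) (\<eta> * x / 2) i (k - i) * q (i + (k - i))) sums T"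
    by (rule diag_swap[OF _ inn ts]) (use a l q hh_nonneg in auto)
  moreover have "(\<Sum>i\<le>k. hh (\<alpha> + 1) (\<eta> * x / 2) i (k - i) * q (i + (k - i))) = p_basis \<alpha> \<eta> k x * q k" for k
    unfolding p_basis_expand sum_distrib_right by (rule sum.cong) auto
  ultimately show ?thesis by simp
qed

lemma mom0: assumes "\<alpha> > -1" "\<eta> * x / 2 \<ge> 0"
  shows "(\<lambda>k. p_basis \<alpha> \<eta> k x) sums 1"
  using mom_gen[OF assms, of "\<lambda>_. 1" "poi (\<eta> * x / 2)" 1] inner0 poi0 assms by simp

lemma mom1: assumes "\<alpha> > -1" "\<eta> * x / 2 \<ge> 0"
  shows "(\<lambda>k. p_basis \<alpha> \<eta> k x * real k) sums (2 * (\<eta> * x / 2) + (\<alpha> + 1))"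
proof (rule mom_gen[OF assms, of real])
  show "(\<lambda>j. hh (\<alpha> + 1) (\<eta> * x / 2) i j * real (i + j)) sums (poi (\<eta> * x / 2) i * (2 * real i + (\<alpha> + 1)))" for i
    by (rule inner1) (use assms in simp)
  have "(\<lambda>i. 2 * (real i * poi (\<eta> * x / 2) i) + (\<alpha> + 1) * poi (\<eta> * x / 2) i) sums (2 * (\<eta> * x / 2) + (\<alpha> + 1) * 1)"
    by (intro sums_add sums_mult poi0 poi1)
  then show "(\<lambda>i. poi (\<eta> * x / 2) i * (2 * real i + (\<alpha> + 1))) sums (2 * (\<eta> * x / 2) + (\<alpha> + 1))"
    by (simp add: algebra_simps)
qed simp

lemma mom2: assumes "\<alpha> > -1" "\<eta> * x / 2 \<ge> 0"
  shows "(\<lambda>k. p_basis \<alpha> \<eta> k x * real k ^ 2) sums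
     (4 * ((\<eta> * x / 2)^2 + \<eta> * x / 2) + (4 * (\<alpha> + 1) + 2) * (\<eta> * x / 2) + ((\<alpha> + 1)^2 + 2 * (\<alpha> + 1)))"
proof (rule mom_gen[OF assms, of "\<lambda>k. real k ^ 2"])
  let ?a = "\<alpha> + 1" and ?l = "\<eta> * x / 2"
  show "(\<lambda>j. hh ?a ?l i j * real (i + j) ^ 2) sums
     (poi ?l i * (real i ^ 2 + 2 * real i * (real i + ?a) + ((real i + ?a)^2 + 2 * (real i + ?a))))" for i
    by (rule inner2) (use assms in simp)
  have "(\<lambda>i. 4 * (real i ^ 2 * poi ?l i) + (4 * ?a + 2) * (real i * poi ?l i) + (?a^2 + 2 * ?a) * poi ?l i) sums
        (4 * (?l^2 + ?l) + (4 * ?a + 2) * ?l + (?a^2 + 2 * ?a) * 1)"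
    by (intro sums_add sums_mult poi0 poi1 poi2)
  then show "(\<lambda>i. poi ?l i * (real i ^ 2 + 2 * real i * (real i + ?a) + ((real i + ?a)^2 + 2 * (real i + ?a)))) sums
     (4 * (?l^2 + ?l) + (4 * ?a + 2) * ?l + (?a^2 + 2 * ?a))"
    by (simp add: algebra_simps power2_eq_square)
qed simp



lemma gamma_moment:
  assumes eta: "\<eta> > 0" and bet: "\<beta> > 0" and k: "k > 0"
  shows "has_bochner_integral lborel (\<lambda>z. indicator {0<..} z * (I_kernel \<beta> \<eta> k z * z ^ m))
           (Gamma (real k * \<beta> + real m) / (Gamma (real k * \<beta>) * (\<eta> * \<beta>) ^ m))"
proof -
  define c where "c = \<eta> * \<beta>"
  define s where "s = real k * \<beta>"
  define \<sigma> where "\<sigma> = s + real m"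
  define K where "K = c / (Gamma s * c ^ m)"
  define g where "g t = indicator {0..} t * t powr (\<sigma> - 1) / exp t" for t :: real
  have c: "c > 0" using eta bet by (simp add: c_def)
  have s: "s > 0" using k bet by (simp add: s_def)
  have \<sigma>: "\<sigma> > 0" using s by (simp add: \<sigma>_def)
  have Gs: "Gamma s > 0" using s by simp
  have K: "K > 0" using c Gs by (simp add: K_def)
  have gnn: "g t \<ge> 0" for t by (simp add: g_def)
  have gmeas[measurable]: "g \<in> borel_measurable borel" unfolding g_def by measurable
  have eqf: "indicator {0<..} z * (I_kernel \<beta> \<eta> k z * z ^ m) = K * g (0 + c * z)" for z
  proof (cases "z > 0")
    case True
    have cz: "c * z > 0" using c True by simp
    have "(c * z) powr (\<sigma> - 1) = (c * z) powr ((s - 1) + real m)" by (simp add: \<sigma>_def algebra_simps)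
    also have "\<dots> = (c * z) powr (s - 1) * (c * z) powr (real m)" by (rule powr_add)
    also have "(c * z) powr (real m) = (c * z) ^ m" using cz by (rule powr_realpow)
    finally have "(c * z) powr (\<sigma> - 1) = (c * z) powr (s - 1) * (c * z) ^ m" .
    moreover have "exp (- \<eta> * \<beta> * z) = 1 / exp (c * z)"
      by (simp add: c_def exp_minus field_simps)
    ultimately show ?thesis using True c Gs
      unfolding I_kernel_def g_def K_def s_def[symmetric] c_def[symmetric]
      by (simp add: power_mult_distrib field_simps)
  next
    case False
    then show ?thesis using c by (auto simp: g_def indicator_def zero_le_mult_iff)
  qed
  have "ennreal (Gamma \<sigma>) = (\<integral>\<^sup>+t. ennreal (g t) \<partial>lborel)"
    using Gamma_conv_nn_integral_real[OF \<sigma>] by (simp add: g_def)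
  also have "\<dots> = ennreal c * (\<integral>\<^sup>+t. ennreal (g (0 + c * t)) \<partial>lborel)"
    using nn_integral_real_affine[of "\<lambda>t. ennreal (g t)" c 0] c by simp
  finally have G1: "ennreal (Gamma \<sigma>) = ennreal c * (\<integral>\<^sup>+t. ennreal (g (0 + c * t)) \<partial>lborel)" .
  have inv: "ennreal (1 / c) * ennreal c = 1" using c by (simp add: ennreal_mult[symmetric])
  have G2: "(\<integral>\<^sup>+t. ennreal (g (0 + c * t)) \<partial>lborel) = ennreal (Gamma \<sigma> / c)"
  proof -
    have "ennreal (Gamma \<sigma> / c) = ennreal (1 / c) * ennreal (Gamma \<sigma>)"
      using c \<sigma> by (simp add: ennreal_mult[symmetric] less_imp_le)
    also have "\<dots> = (ennreal (1 / c) * ennreal c) * (\<integral>\<^sup>+t. ennreal (g (0 + c * t)) \<partial>lborel)"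
      by (simp add: G1 mult.assoc)
    finally show ?thesis by (simp add: inv)
  qed
  have "(\<integral>\<^sup>+z. ennreal (indicator {0<..} z * (I_kernel \<beta> \<eta> k z * z ^ m)) \<partial>lborel)
      = (\<integral>\<^sup>+z. ennreal K * ennreal (g (0 + c * z)) \<partial>lborel)"
    by (simp only: eqf ennreal_mult[OF less_imp_le[OF K] gnn])
  also have "\<dots> = ennreal K * (\<integral>\<^sup>+z. ennreal (g (0 + c * z)) \<partial>lborel)"
    by (rule nn_integral_cmult) measurable
  also have "\<dots> = ennreal (K * (Gamma \<sigma> / c))"
    unfolding G2 using K c \<sigma> by (subst ennreal_mult) (auto intro: less_imp_le)
  also have "K * (Gamma \<sigma> / c) = Gamma (real k * \<beta> + real m) / (Gamma (real k * \<beta>) * (\<eta> * \<beta>) ^ m)"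
    using c eta by (simp add: K_def \<sigma>_def s_def c_def)
  finally have NN: "(\<integral>\<^sup>+z. ennreal (indicator {0<..} z * (I_kernel \<beta> \<eta> k z * z ^ m)) \<partial>lborel)
     = ennreal (Gamma (real k * \<beta> + real m) / (Gamma (real k * \<beta>) * (\<eta> * \<beta>) ^ m))" .
  show ?thesis
  proof (rule has_bochner_integral_nn_integral[OF _ _ _ NN])
    show "(\<lambda>z. indicator {0<..} z * (I_kernel \<beta> \<eta> k z * z ^ m)) \<in> borel_measurable lborel"
      unfolding I_kernel_def by measurable
    show "AE x in lborel. 0 \<le> indicator {0<..} x * (I_kernel \<beta> \<eta> k x * x ^ m)"
      by (rule AE_I2) (simp add: eqf K g_def less_imp_le)
    show "0 \<le> Gamma (real k * \<beta> + real m) / (Gamma (real k * \<beta>) * (\<eta> * \<beta>) ^ m)"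
      using \<sigma> s c eta bet unfolding \<sigma>_def s_def by (simp add: less_imp_le)
  qed
qed



lemma kernel_bound:
  assumes eta: "\<eta> > 0" and bet: "\<beta> > 0" and k: "k > 0"
    and cont: "continuous_on {0..} \<Phi>" and B: "\<And>z. z \<ge> 0 \<Longrightarrow> \<bar>\<Phi> z\<bar> \<le> B"
    and mod: "\<And>z. z \<ge> 0 \<Longrightarrow> \<bar>\<Phi> z - \<Phi> x\<bar> \<le> \<epsilon> + C * (z - x)^2" and C: "C \<ge> 0"
  shows "\<bar>(LINT z:{0<..}|lborel. I_kernel \<beta> \<eta> k z * \<Phi> z) - \<Phi> x\<bar>
      \<le> \<epsilon> + C * (real k ^ 2 / \<eta> ^ 2 + real k / (\<beta> * \<eta> ^ 2) - 2 * x * real k / \<eta> + x ^ 2)"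
proof -
  define J where "J z = indicator {0<..} z * I_kernel \<beta> \<eta> k z" for z :: real
  define s where "s = real k * \<beta>"
  have s: "s > 0" using k bet by (simp add: s_def)
  have Jnn: "J z \<ge> 0" for z
    unfolding J_def I_kernel_def using eta bet s[unfolded s_def] by (auto simp: indicator_def intro!: mult_nonneg_nonneg divide_nonneg_nonneg)
  have gm: "has_bochner_integral lborel (\<lambda>z. J z * z ^ m) (Gamma (s + real m) / (Gamma s * (\<eta> * \<beta>) ^ m))" for m
    using gamma_moment[OF eta bet k, of m] unfolding J_def s_def by (simp add: mult.assoc)
  have G1: "Gamma (s + 1) = s * Gamma s"
    using s by (intro Gamma_plus1) (auto simp: nonpos_Ints_def)
  have G2: "Gamma (s + 2) = (s + 1) * (s * Gamma s)"
    using Gamma_plus1[of "s + 1"] s G1 by (auto simp: nonpos_Ints_def add.assoc)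
  have Gs: "Gamma s > 0" using s by simp
  have h0: "has_bochner_integral lborel (\<lambda>z. J z) 1"
    using gm[of 0] Gs by simp
  have h1: "has_bochner_integral lborel (\<lambda>z. J z * z) (real k / \<eta>)"
    using gm[of 1] Gs G1 eta bet by (simp add: s_def)
  have h2: "has_bochner_integral lborel (\<lambda>z. J z * z ^ 2) (real k ^ 2 / \<eta> ^ 2 + real k / (\<beta> * \<eta> ^ 2))"
  proof -
    have "Gamma (s + real 2) / (Gamma s * (\<eta> * \<beta>) ^ 2) = real k ^ 2 / \<eta> ^ 2 + real k / (\<beta> * \<eta> ^ 2)"
      using G2 Gs eta bet by (simp add: s_def field_simps power2_eq_square)
    then show ?thesis using gm[of 2] by simp
  qed
  have Jmeas: "J \<in> borel_measurable lborel" unfolding J_def I_kernel_def by measurable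
  have Phimeas: "(\<lambda>z. indicator {0<..} z *\<^sub>R \<Phi> z) \<in> borel_measurable borel"
    by (rule borel_measurable_continuous_on_indicator) (auto intro: continuous_on_subset[OF cont])
  have JPhimeas: "(\<lambda>z. J z * \<Phi> z) \<in> borel_measurable lborel"
  proof -
    have "(\<lambda>z. J z * (indicator {0<..} z *\<^sub>R \<Phi> z)) \<in> borel_measurable lborel"
      using Jmeas Phimeas by measurable
    moreover have "(\<lambda>z. J z * (indicator {0<..} z *\<^sub>R \<Phi> z)) = (\<lambda>z. J z * \<Phi> z)"
      by (auto simp: J_def indicator_def)
    ultimately show ?thesis by simp
  qed
  have intJPhi: "integrable lborel (\<lambda>z. J z * \<Phi> z)"
  proof (rule Bochner_Integration.integrable_bound[OF _ JPhimeas])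
    show "integrable lborel (\<lambda>z. J z * B)" using h0 by (auto simp: has_bochner_integral_iff)
    show "AE z in lborel. norm (J z * \<Phi> z) \<le> norm (J z * B)"
    proof (rule AE_I2)
      fix z :: real
      show "norm (J z * \<Phi> z) \<le> norm (J z * B)"
      proof (cases "z > 0")
        case True
        have "\<bar>\<Phi> z\<bar> \<le> B" using B True by simp
        then have "\<bar>\<Phi> z\<bar> \<le> \<bar>B\<bar>" by simp
        then show ?thesis using Jnn[of z] by (simp add: abs_mult mult_left_mono)
      next
        case False then show ?thesis by (simp add: J_def)
      qed
    qed
  qed
  have eqA: "(LINT z:{0<..}|lborel. I_kernel \<beta> \<eta> k z * \<Phi> z) = (\<integral>z. J z * \<Phi> z \<partial>lborel)"
    unfolding set_lebesgue_integral_def J_def by (simp add: mult.assoc)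
  have hd: "has_bochner_integral lborel (\<lambda>z. J z * \<Phi> z - \<Phi> x * J z) ((\<integral>z. J z * \<Phi> z \<partial>lborel) - \<Phi> x * 1)"
    by (intro has_bochner_integral_diff has_bochner_integral_mult_right h0 has_bochner_integral_integrable intJPhi)
  define Q where "Q = real k ^ 2 / \<eta> ^ 2 + real k / (\<beta> * \<eta> ^ 2) - 2 * x * real k / \<eta> + x ^ 2"
  have hb: "has_bochner_integral lborel (\<lambda>z. \<epsilon> * J z + C * (J z * z ^ 2) - (2 * C * x) * (J z * z) + (C * x^2) * J z)
      (\<epsilon> * 1 + C * (real k ^ 2 / \<eta> ^ 2 + real k / (\<beta> * \<eta> ^ 2)) - (2 * C * x) * (real k / \<eta>) + (C * x^2) * 1)"
    by (intro has_bochner_integral_diff has_bochner_integral_add has_bochner_integral_mult_right h0 h1 h2)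
  have hbv: "\<epsilon> * 1 + C * (real k ^ 2 / \<eta> ^ 2 + real k / (\<beta> * \<eta> ^ 2)) - (2 * C * x) * (real k / \<eta>) + (C * x^2) * 1
      = \<epsilon> + C * Q"
    by (simp add: Q_def algebra_simps)
  have "norm (\<integral>z. J z * \<Phi> z - \<Phi> x * J z \<partial>lborel)
      \<le> (\<integral>z. \<epsilon> * J z + C * (J z * z ^ 2) - (2 * C * x) * (J z * z) + (C * x^2) * J z \<partial>lborel)"
  proof (rule Bochner_Integration.integral_norm_bound_integral)
    show "integrable lborel (\<lambda>z. J z * \<Phi> z - \<Phi> x * J z)" using hd by (auto simp: has_bochner_integral_iff)
    show "integrable lborel (\<lambda>z. \<epsilon> * J z + C * (J z * z ^ 2) - (2 * C * x) * (J z * z) + (C * x^2) * J z)"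
      using hb by (auto simp: has_bochner_integral_iff)
    fix z :: real
    show "norm (J z * \<Phi> z - \<Phi> x * J z) \<le> \<epsilon> * J z + C * (J z * z ^ 2) - (2 * C * x) * (J z * z) + (C * x^2) * J z"
    proof (cases "z > 0")
      case True
      have "norm (J z * \<Phi> z - \<Phi> x * J z) = J z * \<bar>\<Phi> z - \<Phi> x\<bar>"
      proof -
        have "J z * \<Phi> z - \<Phi> x * J z = J z * (\<Phi> z - \<Phi> x)" by (simp add: algebra_simps)
        then show ?thesis using Jnn[of z] by (simp add: abs_mult)
      qed
      also have "\<dots> \<le> J z * (\<epsilon> + C * (z - x)^2)"
        using mod[of z] True Jnn[of z] by (intro mult_left_mono) auto
      also have "\<dots> = \<epsilon> * J z + C * (J z * z ^ 2) - (2 * C * x) * (J z * z) + (C * x^2) * J z"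
        by (simp add: power2_eq_square algebra_simps)
      finally show ?thesis .
    next
      case False then show ?thesis by (simp add: J_def)
    qed
  qed
  then have "\<bar>(\<integral>z. J z * \<Phi> z \<partial>lborel) - \<Phi> x\<bar> \<le> \<epsilon> + C * Q"
    using has_bochner_integral_integral_eq[OF hd] has_bochner_integral_integral_eq[OF hb] hbv by simp
  then show ?thesis unfolding eqA Q_def .
qed



lemma core_bound:
  assumes al: "\<alpha> > -1" and bet: "\<beta> > 0" and eta: "\<eta> > 0" and x: "x \<ge> 0"
    and cont: "continuous_on {0..} \<Phi>" and B: "\<And>z. z \<ge> 0 \<Longrightarrow> \<bar>\<Phi> z\<bar> \<le> B"
    and mod: "\<And>z. z \<ge> 0 \<Longrightarrow> \<bar>\<Phi> z - \<Phi> x\<bar> \<le> \<epsilon> + C * (z - x)^2" and C: "C \<ge> 0"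
  shows "\<bar>R_op \<alpha> \<beta> \<eta> \<Phi> x - \<Phi> x\<bar> \<le> \<epsilon> + C * (3 * x / \<eta> + ((\<alpha> + 1)^2 + 2 * (\<alpha> + 1)) / \<eta>^2
            + (\<alpha> + 1) / (\<beta> * \<eta>^2) + x / (\<beta> * \<eta>))"
proof -
  define P where "P k = p_basis \<alpha> \<eta> k x" for k
  define A where "A k = (LINT z:{0<..}|lborel. I_kernel \<beta> \<eta> k z * \<Phi> z)" for k
  define A' where "A' k = (if k = 0 then \<Phi> 0 else A k)" for k
  define q where "q k = real k ^ 2 / \<eta> ^ 2 + real k / (\<beta> * \<eta> ^ 2) - 2 * x * real k / \<eta> + x ^ 2" for k
  define d where "d k = A' k - \<Phi> x" for k
  define Qv where "Qv = 3 * x / \<eta> + ((\<alpha> + 1)^2 + 2 * (\<alpha> + 1)) / \<eta>^2 + (\<alpha> + 1) / (\<beta> * \<eta>^2) + x / (\<beta> * \<eta>)"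
  have l: "\<eta> * x / 2 \<ge> 0" using eta x by simp
  have Pnn: "P k \<ge> 0" for k
    unfolding P_def p_basis_expand by (intro sum_nonneg hh_nonneg) (use al l in auto)
  have dq: "\<bar>d k\<bar> \<le> \<epsilon> + C * q k" for k
  proof (cases "k = 0")
    case True
    then show ?thesis using mod[of 0] by (simp add: d_def A'_def q_def)
  next
    case False
    then show ?thesis unfolding d_def A'_def q_def A_def
      using kernel_bound[OF eta bet _ cont B mod C, of k] by simp
  qed
  have S0: "P sums 1" unfolding P_def using mom0[OF al l] .
  have S1: "(\<lambda>k. P k * real k) sums (2 * (\<eta> * x / 2) + (\<alpha> + 1))" unfolding P_def using mom1[OF al l] .
  have S2: "(\<lambda>k. P k * real k ^ 2) sums
     (4 * ((\<eta> * x / 2)^2 + \<eta> * x / 2) + (4 * (\<alpha> + 1) + 2) * (\<eta> * x / 2) + ((\<alpha> + 1)^2 + 2 * (\<alpha> + 1)))"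
    unfolding P_def using mom2[OF al l] .
  have SQ: "(\<lambda>k. P k * (\<epsilon> + C * q k)) sums (\<epsilon> + C * Qv)"
  proof -
    have "(\<lambda>k. \<epsilon> * P k + (C / \<eta>^2) * (P k * real k ^ 2) + (C / (\<beta> * \<eta>^2) - 2 * C * x / \<eta>) * (P k * real k) + (C * x^2) * P k)
      sums (\<epsilon> * 1 + (C / \<eta>^2) * (4 * ((\<eta> * x / 2)^2 + \<eta> * x / 2) + (4 * (\<alpha> + 1) + 2) * (\<eta> * x / 2) + ((\<alpha> + 1)^2 + 2 * (\<alpha> + 1)))
          + (C / (\<beta> * \<eta>^2) - 2 * C * x / \<eta>) * (2 * (\<eta> * x / 2) + (\<alpha> + 1)) + (C * x^2) * 1)"
      by (intro sums_add sums_mult S0 S1 S2)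
    moreover have E: "(\<lambda>k. \<epsilon> * P k + (C / \<eta>^2) * (P k * real k ^ 2) + (C / (\<beta> * \<eta>^2) - 2 * C * x / \<eta>) * (P k * real k) + (C * x^2) * P k)
       = (\<lambda>k. P k * (\<epsilon> + C * q k))"
      using eta bet by (intro ext) (simp add: q_def field_simps)
    moreover have V: "\<epsilon> * 1 + (C / \<eta>^2) * (4 * ((\<eta> * x / 2)^2 + \<eta> * x / 2) + (4 * (\<alpha> + 1) + 2) * (\<eta> * x / 2) + ((\<alpha> + 1)^2 + 2 * (\<alpha> + 1)))
          + (C / (\<beta> * \<eta>^2) - 2 * C * x / \<eta>) * (2 * (\<eta> * x / 2) + (\<alpha> + 1)) + (C * x^2) * 1 = \<epsilon> + C * Qv"
      using eta bet by (simp add: Qv_def field_simps power2_eq_square)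
    ultimately show ?thesis by (simp only: E V)
  qed
  have absb: "\<bar>P k * d k\<bar> \<le> P k * (\<epsilon> + C * q k)" for k
    using dq[of k] Pnn[of k] by (simp add: abs_mult mult_left_mono)
  have sabs: "summable (\<lambda>k. \<bar>P k * d k\<bar>)"
    by (rule summable_rabs_comparison_test[OF _ sums_summable[OF SQ]]) (use absb in auto)
  have sPd: "summable (\<lambda>k. P k * d k)" using sabs by (rule summable_rabs_cancel)
  have bound: "\<bar>suminf (\<lambda>k. P k * d k)\<bar> \<le> \<epsilon> + C * Qv"
  proof -
    have "\<bar>suminf (\<lambda>k. P k * d k)\<bar> \<le> (\<Sum>k. \<bar>P k * d k\<bar>)" using sabs by (rule summable_rabs)
    also have "\<dots> \<le> (\<Sum>k. P k * (\<epsilon> + C * q k))"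
      by (rule suminf_le[OF absb sabs sums_summable[OF SQ]])
    also have "\<dots> = \<epsilon> + C * Qv" using SQ by (rule sums_unique[symmetric])
    finally show ?thesis .
  qed
  have "(\<lambda>k. P k * d k + \<Phi> x * P k) sums (suminf (\<lambda>k. P k * d k) + \<Phi> x * 1)"
    by (intro sums_add sums_mult S0 summable_sums sPd)
  moreover have "(\<lambda>k. P k * d k + \<Phi> x * P k) = (\<lambda>k. P k * A' k)"
    by (auto simp: d_def algebra_simps)
  ultimately have "(\<lambda>k. P k * A' k) sums (suminf (\<lambda>k. P k * d k) + \<Phi> x)" by simp
  then have "(\<lambda>n. P (Suc n) * A' (Suc n)) sums (suminf (\<lambda>k. P k * d k) + \<Phi> x - P 0 * A' 0)"
    using sums_Suc_iff[of "\<lambda>k. P k * A' k" "suminf (\<lambda>k. P k * d k) + \<Phi> x - P 0 * A' 0"] by simp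
  then have "(\<Sum>n. P (Suc n) * A (Suc n)) = suminf (\<lambda>k. P k * d k) + \<Phi> x - P 0 * \<Phi> 0"
    by (simp add: A'_def sums_iff)
  then have "R_op \<alpha> \<beta> \<eta> \<Phi> x = suminf (\<lambda>k. P k * d k) + \<Phi> x"
    unfolding R_op_def P_def[symmetric] A_def[symmetric] by simp
  then show ?thesis using bound by (simp add: Qv_def)
qed



theorem mainTheorem4:
  fixes \<alpha> \<beta> :: real and \<Phi> :: "real \<Rightarrow> real"
  assumes "\<alpha> > -1" and "\<beta> > 0"
    and "continuous_on {0..} \<Phi>" and "bounded (\<Phi> ` {0..})"
  shows "\<forall>K. compact K \<and> K \<subseteq> {0..} \<longrightarrow>
           uniform_limit K (\<lambda>\<eta> x. R_op \<alpha> \<beta> \<eta> \<Phi> x) \<Phi> at_top"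
proof (intro allI impI)
  fix K :: "real set" assume KK: "compact K \<and> K \<subseteq> {0..}"
  note al = assms(1) and bet = assms(2) and cont = assms(3)
  obtain M0 where M0: "\<forall>x\<in>K. \<bar>x\<bar> \<le> M0"
    using compact_imp_bounded[of K] KK bounded_real by blast
  define M where "M = max M0 0"
  have M: "M \<ge> 0" "\<And>x. x \<in> K \<Longrightarrow> 0 \<le> x \<and> x \<le> M"
    using M0 KK unfolding M_def by force+
  obtain B where B: "B > 0" "\<And>z. z \<ge> 0 \<Longrightarrow> \<bar>\<Phi> z\<bar> \<le> B"
    using assms(4) unfolding bounded_pos by auto
  define a where "a = \<alpha> + 1"
  have a: "a > 0" using al by (simp add: a_def)
  define D where "D = 3 * M + (a^2 + 2 * a) + a / \<beta> + M / \<beta>"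
  have D: "D \<ge> 0" using M a bet by (simp add: D_def)
  show "uniform_limit K (\<lambda>\<eta> x. R_op \<alpha> \<beta> \<eta> \<Phi> x) \<Phi> at_top"
  proof (rule uniform_limitI)
    fix e :: real assume e: "e > 0"
    have "uniformly_continuous_on {0..M+1} \<Phi>"
      by (rule compact_uniformly_continuous) (auto intro: continuous_on_subset[OF cont])
    then obtain \<delta> where \<delta>: "\<delta> > 0" "\<And>x z. x \<in> {0..M+1} \<Longrightarrow> z \<in> {0..M+1} \<Longrightarrow> dist z x < \<delta> \<Longrightarrow> dist (\<Phi> z) (\<Phi> x) < e / 2"
      unfolding uniformly_continuous_on_def using e by (meson half_gt_zero)
    define \<delta>' where "\<delta>' = min \<delta> 1"
    have \<delta>': "\<delta>' > 0" "\<delta>' \<le> \<delta>" "\<delta>' \<le> 1" using \<delta> by (auto simp: \<delta>'_def)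
    define C where "C = 2 * B / \<delta>'^2"
    have C: "C \<ge> 0" using B \<delta>' by (simp add: C_def)
    have modu: "\<bar>\<Phi> z - \<Phi> x\<bar> \<le> e / 2 + C * (z - x)^2" if x: "x \<in> K" and z: "z \<ge> 0" for x z
    proof (cases "\<bar>z - x\<bar> < \<delta>'")
      case True
      have "x \<in> {0..M+1}" using M(2)[OF x] by simp
      moreover have "z \<in> {0..M+1}" using M(2)[OF x] z True \<delta>' by auto
      ultimately have "dist (\<Phi> z) (\<Phi> x) < e / 2" using \<delta>(2) True \<delta>' by (simp add: dist_real_def)
      moreover have "C * (z - x)^2 \<ge> 0" using C by simp
      ultimately show ?thesis by (simp add: dist_real_def)
    next
      case False
      have "\<delta>'^2 \<le> \<bar>z - x\<bar>^2" using False \<delta>' by (intro power_mono) auto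
      then have "\<delta>'^2 \<le> (z - x)^2" by simp
      then have "C * \<delta>'^2 \<le> C * (z - x)^2" using C by (rule mult_left_mono)
      moreover have "C * \<delta>'^2 = 2 * B" using \<delta>' by (simp add: C_def)
      moreover have "\<bar>\<Phi> z - \<Phi> x\<bar> \<le> 2 * B"
        using B(2)[of z] B(2)[of x] z M(2)[OF x] by linarith
      ultimately show ?thesis using e by linarith
    qed
    define N where "N = max 1 (2 * C * D / e + 1)"
    have "eventually (\<lambda>\<eta>. \<forall>x\<in>K. dist (R_op \<alpha> \<beta> \<eta> \<Phi> x) (\<Phi> x) < e) at_top"
      unfolding eventually_at_top_linorder
    proof (intro exI allI impI ballI)
      fix \<eta> x assume eN: "\<eta> \<ge> N" and x: "x \<in> K"
      have eta1: "\<eta> \<ge> 1" using eN by (simp add: N_def)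
      have eta: "\<eta> > 0" using eta1 by simp
      have x0: "0 \<le> x" "x \<le> M" using M(2)[OF x] by auto
      have cb: "\<bar>R_op \<alpha> \<beta> \<eta> \<Phi> x - \<Phi> x\<bar> \<le> e / 2 + C * (3 * x / \<eta> + ((\<alpha> + 1)^2 + 2 * (\<alpha> + 1)) / \<eta>^2
            + (\<alpha> + 1) / (\<beta> * \<eta>^2) + x / (\<beta> * \<eta>))"
        by (rule core_bound[OF al bet eta x0(1) cont B(2) modu[OF x] C])
      have Qb: "3 * x / \<eta> + ((\<alpha> + 1)^2 + 2 * (\<alpha> + 1)) / \<eta>^2 + (\<alpha> + 1) / (\<beta> * \<eta>^2) + x / (\<beta> * \<eta>) \<le> D / \<eta>"
      proof -
        have e2: "\<eta>^2 \<ge> \<eta>" using eta1 by (simp add: power2_eq_square)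
        have t1: "3 * x / \<eta> \<le> 3 * M / \<eta>" using x0 eta by (simp add: divide_right_mono)
        have t2: "(a^2 + 2 * a) / \<eta>^2 \<le> (a^2 + 2 * a) / \<eta>"
          using a eta e2 by (intro divide_left_mono) auto
        have t3: "a / (\<beta> * \<eta>^2) \<le> a / (\<beta> * \<eta>)"
          using a eta e2 bet by (intro divide_left_mono mult_left_mono) auto
        have t4: "x / (\<beta> * \<eta>) \<le> M / (\<beta> * \<eta>)" using x0 eta bet by (simp add: divide_right_mono)
        have "D / \<eta> = 3 * M / \<eta> + (a^2 + 2 * a) / \<eta> + a / (\<beta> * \<eta>) + M / (\<beta> * \<eta>)"
          by (simp add: D_def add_divide_distrib)
        then show ?thesis using t1 t2 t3 t4 unfolding a_def by linarith
      qed
      have F1: "C * D / \<eta> < e / 2"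
      proof -
        have "\<eta> > 2 * C * D / e" using eN by (simp add: N_def)
        then have "\<eta> * e > 2 * C * D" using e by (simp add: field_simps)
        then show ?thesis using eta e by (simp add: field_simps)
      qed
      have F2: "C * (3 * x / \<eta> + ((\<alpha> + 1)^2 + 2 * (\<alpha> + 1)) / \<eta>^2 + (\<alpha> + 1) / (\<beta> * \<eta>^2) + x / (\<beta> * \<eta>)) \<le> C * D / \<eta>"
        using mult_left_mono[OF Qb C] by simp
      show "dist (R_op \<alpha> \<beta> \<eta> \<Phi> x) (\<Phi> x) < e"
        unfolding dist_real_def using cb F1 F2 by linarith
    qed
    then show "\<forall>\<^sub>F \<eta> in at_top. \<forall>x\<in>K. dist (R_op \<alpha> \<beta> \<eta> \<Phi> x) (\<Phi> x) < e" .
  qed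
qed


end
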